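(* A Schröder permutation $\pi\in\mathcal{S}_n$ avoids $231$ if and only if (i) every diagram row of $\pi$ contains exactly one element of $\mathcal{E}(\pi)$, and (ii) every diagram column of $\pi$ contains at most one element of $\mathcal{E}(\pi)$.
   Context: A permutation avoids $\tau\in\mathcal{S}_k$ if no subsequence of length $k$ is in the same relative order as $\tau$. A Schröder permutation is one avoiding both $1243$ and $2143$. Represent $\pi\in\mathcal{S}_n$ by an $n\times n$ array, rows $i$ numbered top to bottom, columns $j$ left to right, with a dot in square $(i,\pi_i)$. The diagram $D(\pi)$ is the set of squares $(i,j)$ with $\pi_i>j$ and $\pi^{-1}(j)>i$. A diagram row (resp. diagram column) is a row (resp. column) of the array containing at least one square of $D(\pi)$. The essential set $\mathcal{E}(\pi)$ is the set of $(i,j)\in D(\pi)$ with $(i+1,j)\notin D(\pi)$ and $(i,j+1)\notin D(\pi)$ (squares outside the array count as not in $D(\pi)$). *)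

theory Defs
  imports "HOL-Combinatorics.Permutations"
begin

definition contains_pattern :: "nat \<Rightarrow> (nat \<Rightarrow> nat) \<Rightarrow> nat list \<Rightarrow> bool" where
  "contains_pattern n \<pi> \<tau> \<longleftrightarrow>
     (\<exists>idx :: nat list. length idx = length \<tau> \<and> sorted_wrt (<) idx \<and> set idx \<subseteq> {1..n} \<and>
        (\<forall>a < length \<tau>. \<forall>b < length \<tau>.
            (\<pi> (idx ! a) < \<pi> (idx ! b)) \<longleftrightarrow> (\<tau> ! a < \<tau> ! b)))"

definition avoids :: "nat \<Rightarrow> (nat \<Rightarrow> nat) \<Rightarrow> nat list \<Rightarrow> bool" where
  "avoids n \<pi> \<tau> \<longleftrightarrow> \<not> contains_pattern n \<pi> \<tau>"

definition schroeder :: "nat \<Rightarrow> (nat \<Rightarrow> nat) \<Rightarrow> bool" where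
  "schroeder n \<pi> \<longleftrightarrow> avoids n \<pi> [1,2,4,3] \<and> avoids n \<pi> [2,1,4,3]"

definition diagram :: "nat \<Rightarrow> (nat \<Rightarrow> nat) \<Rightarrow> (nat \<times> nat) set" where
  "diagram n \<pi> = {(i,j). i \<in> {1..n} \<and> j \<in> {1..n} \<and> \<pi> i > j \<and> inv \<pi> j > i}"

definition essential_set :: "nat \<Rightarrow> (nat \<Rightarrow> nat) \<Rightarrow> (nat \<times> nat) set" where
  "essential_set n \<pi> = {(i,j). (i,j) \<in> diagram n \<pi> \<and> (i+1,j) \<notin> diagram n \<pi> \<and> (i,j+1) \<notin> diagram n \<pi>}"

definition diagram_row :: "nat \<Rightarrow> (nat \<Rightarrow> nat) \<Rightarrow> nat \<Rightarrow> bool" where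
  "diagram_row n \<pi> i \<longleftrightarrow> (\<exists>j. (i,j) \<in> diagram n \<pi>)"

definition diagram_col :: "nat \<Rightarrow> (nat \<Rightarrow> nat) \<Rightarrow> nat \<Rightarrow> bool" where
  "diagram_col n \<pi> j \<longleftrightarrow> (\<exists>i. (i,j) \<in> diagram n \<pi>)"

end

theory Submission
  imports Defs
begin

lemma c231_iff:
  "contains_pattern n \<pi> [2,3,1] \<longleftrightarrow>
    (\<exists>a b c. 1 \<le> a \<and> a < b \<and> b < c \<and> c \<le> n \<and> \<pi> c < \<pi> a \<and> \<pi> a < \<pi> b)"
proof
  assume "contains_pattern n \<pi> [2,3,1]"
  then obtain idx :: "nat list" where l0: "length idx = length [2,3,1::nat]" and s: "sorted_wrt (<) idx"
    and st: "set idx \<subseteq> {1..n}"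
    and c0: "\<forall>a < length [2,3,1::nat]. \<forall>b < length [2,3,1::nat]. (\<pi> (idx ! a) < \<pi> (idx ! b)) \<longleftrightarrow> ([2,3,1::nat] ! a < [2,3,1::nat] ! b)"
    unfolding contains_pattern_def by blast
  have l: "length idx = 3" using l0 by simp
  have c20: "\<pi> (idx ! 2) < \<pi> (idx ! 0)" using c0[rule_format, of 2 0] by simp
  have c01: "\<pi> (idx ! 0) < \<pi> (idx ! 1)" using c0[rule_format, of 0 1] by simp
  have o1: "idx ! 0 < idx ! 1" using s l sorted_wrt_nth_less[of "(<)" idx 0 1] by simp
  have o2: "idx ! 1 < idx ! 2" using s l sorted_wrt_nth_less[of "(<)" idx 1 2] by simp
  have "idx ! 0 \<in> set idx" "idx ! 2 \<in> set idx" using l by (simp_all add: nth_mem)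
  then have m0: "idx ! 0 \<in> {1..n}" using st by blast
  have m2: "idx ! 2 \<in> {1..n}" using st \<open>idx ! 2 \<in> set idx\<close> by blast
  show "\<exists>a b c. 1 \<le> a \<and> a < b \<and> b < c \<and> c \<le> n \<and> \<pi> c < \<pi> a \<and> \<pi> a < \<pi> b"
    using c20 c01 o1 o2 m0 m2 by (intro exI[of _ "idx!0"] exI[of _ "idx!1"] exI[of _ "idx!2"]) simp
next
  assume "\<exists>a b c. 1 \<le> a \<and> a < b \<and> b < c \<and> c \<le> n \<and> \<pi> c < \<pi> a \<and> \<pi> a < \<pi> b"
  then obtain a b c where h: "1 \<le> a" "a < b" "b < c" "c \<le> n" "\<pi> c < \<pi> a" "\<pi> a < \<pi> b" by blast
  have A: "length [a,b,c] = length [2,3,1::nat]" by simp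
  have B: "sorted_wrt (<) [a,b,c]" using h by simp
  have C: "set [a,b,c] \<subseteq> {1..n}" using h by simp
  have D: "\<forall>x < length [2,3,1::nat]. \<forall>y < length [2,3,1::nat].
            (\<pi> ([a,b,c] ! x) < \<pi> ([a,b,c] ! y)) \<longleftrightarrow> ([2,3,1::nat] ! x < [2,3,1] ! y)"
  proof (intro allI impI)
    fix x y :: nat assume "x < length [2,3,1::nat]" "y < length [2,3,1::nat]"
    then have "x = 0 \<or> x = 1 \<or> x = 2" "y = 0 \<or> y = 1 \<or> y = 2" by auto
    then show "(\<pi> ([a,b,c] ! x) < \<pi> ([a,b,c] ! y)) = ([2,3,1::nat] ! x < [2,3,1] ! y)"
      using h by (elim disjE) auto
  qed
  show "contains_pattern n \<pi> [2,3,1]"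
    unfolding contains_pattern_def using A B C D by blast
qed

lemma desc_chain:
  fixes f :: "nat \<Rightarrow> nat"
  shows "a \<le> b \<Longrightarrow> (\<forall>i. a \<le> i \<longrightarrow> i < b \<longrightarrow> f (Suc i) \<le> f i) \<Longrightarrow> f b \<le> f a"
proof (induction b)
  case 0 then show ?case by simp
next
  case (Suc b)
  show ?case
  proof (cases "a = Suc b")
    case True then show ?thesis by simp
  next
    case False
    then have "a \<le> b" using Suc.prems by simp
    then have "f b \<le> f a" using Suc by auto
    moreover have "f (Suc b) \<le> f b" using Suc.prems \<open>a \<le> b\<close> by auto
    ultimately show ?thesis by simp
  qed
qed

lemma switch_point:
  "P b \<Longrightarrow> \<not> P c \<Longrightarrow> b < c \<Longrightarrow> \<exists>u. b \<le> u \<and> u < c \<and> P u \<and> \<not> P (Suc u)"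
proof (induction c)
  case 0 then show ?case by simp
next
  case (Suc c)
  show ?case
  proof (cases "P c")
    case True then show ?thesis using Suc.prems by (intro exI[of _ c]) auto
  next
    case False
    then have "b < c" using Suc.prems by (metis less_SucE)
    then show ?thesis using Suc.IH[OF Suc.prems(1) False] by auto
  qed
qed

lemma adjust231:
  fixes \<pi> :: "nat \<Rightarrow> nat"
  assumes perm: "\<pi> permutes {1..n}"
  shows "1 \<le> a \<Longrightarrow> a < b \<Longrightarrow> b < c \<Longrightarrow> c \<le> n \<Longrightarrow> \<pi> c < \<pi> a \<Longrightarrow> \<pi> a < \<pi> b \<Longrightarrow>
    \<exists>a b c. 1 \<le> a \<and> a < b \<and> b < c \<and> c \<le> n \<and> \<pi> c < \<pi> a \<and> \<pi> a < \<pi> b \<and> \<pi> a = Suc (\<pi> c)"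
proof (induction "\<pi> a - \<pi> c" arbitrary: a b c rule: less_induct)
  case less
  have pin: "\<And>i. i \<in> {1..n} \<Longrightarrow> \<pi> i \<in> {1..n}" using permutes_in_image[OF perm] by blast
  have ipin: "\<And>j. j \<in> {1..n} \<Longrightarrow> inv \<pi> j \<in> {1..n}" using permutes_in_image[OF permutes_inv[OF perm]] by blast
  have pi_inv: "\<And>j. \<pi> (inv \<pi> j) = j" using perm permutes_inverses(1) by metis
  show ?case
  proof (cases "\<pi> a = Suc (\<pi> c)")
    case True then show ?thesis using less.prems by blast
  next
    case False
    define v where "v = Suc (\<pi> c)"
    have "v < \<pi> a" using False less.prems unfolding v_def by simp
    have "\<pi> a \<in> {1..n}" using pin less.prems by simp
    then have "v \<in> {1..n}" using \<open>v < \<pi> a\<close> unfolding v_def by simp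
    define q where "q = inv \<pi> v"
    have q: "q \<in> {1..n}" "\<pi> q = v" using ipin pi_inv \<open>v \<in> {1..n}\<close> unfolding q_def by auto
    have "q \<noteq> b" using q \<open>v < \<pi> a\<close> less.prems by auto
    show ?thesis
    proof (cases "q < b")
      case True
      then show ?thesis using q less.prems unfolding v_def
        by (intro exI[of _ q] exI[of _ b] exI[of _ c]) auto
    next
      case False
      then have "b < q" using \<open>q \<noteq> b\<close> by simp
      have "\<pi> a - \<pi> q < \<pi> a - \<pi> c" using q \<open>v < \<pi> a\<close> unfolding v_def by simp
      from less.hyps[OF this, of b] show ?thesis
        using less.prems q \<open>b < q\<close> \<open>v < \<pi> a\<close> by auto
    qed
  qed
qed

theorem proposition3p11:
  fixes n :: nat and \<pi> :: "nat \<Rightarrow> nat"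
  assumes "\<pi> permutes {1..n}" and "schroeder n \<pi>"
  shows "avoids n \<pi> [2,3,1] \<longleftrightarrow>
    ((\<forall>i. diagram_row n \<pi> i \<longrightarrow> card {j. (i,j) \<in> essential_set n \<pi>} = 1) \<and>
     (\<forall>j. diagram_col n \<pi> j \<longrightarrow> card {i. (i,j) \<in> essential_set n \<pi>} \<le> 1))"
proof -
  note perm = assms(1)
  have pin: "\<And>i. i \<in> {1..n} \<Longrightarrow> \<pi> i \<in> {1..n}" using permutes_in_image[OF perm] by blast
  have ipin: "\<And>j. j \<in> {1..n} \<Longrightarrow> inv \<pi> j \<in> {1..n}" using permutes_in_image[OF permutes_inv[OF perm]] by blast
  have pi_inv: "\<And>j. \<pi> (inv \<pi> j) = j" using perm permutes_inverses(1) by metis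
  have inv_pi: "\<And>j. inv \<pi> (\<pi> j) = j" using perm permutes_inverses(2) by metis
  have inj: "\<And>x y. \<pi> x = \<pi> y \<longleftrightarrow> x = y" using perm permutes_inj by (metis injD)
  have Dm: "\<And>i j. (i,j) \<in> diagram n \<pi> \<longleftrightarrow> 1 \<le> i \<and> i \<le> n \<and> 1 \<le> j \<and> j \<le> n \<and> j < \<pi> i \<and> i < inv \<pi> j"
    by (auto simp: diagram_def)
  have Em: "\<And>i j. (i,j) \<in> essential_set n \<pi> \<longleftrightarrow> (i,j) \<in> diagram n \<pi> \<and> (i+1,j) \<notin> diagram n \<pi> \<and> (i,j+1) \<notin> diagram n \<pi>"
    by (simp add: essential_set_def)
  show ?thesis
  proof
    assume "avoids n \<pi> [2,3,1]"
    then have A: "\<And>a b c. 1 \<le> a \<Longrightarrow> a < b \<Longrightarrow> b < c \<Longrightarrow> c \<le> n \<Longrightarrow> \<pi> c < \<pi> a \<Longrightarrow> \<pi> a < \<pi> b \<Longrightarrow> False"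
      unfolding avoids_def c231_iff by blast
    show "(\<forall>i. diagram_row n \<pi> i \<longrightarrow> card {j. (i,j) \<in> essential_set n \<pi>} = 1) \<and>
     (\<forall>j. diagram_col n \<pi> j \<longrightarrow> card {i. (i,j) \<in> essential_set n \<pi>} \<le> 1)"
    proof (intro conjI allI impI)
      fix i assume "diagram_row n \<pi> i"
      then obtain j0 where j0: "(i,j0) \<in> diagram n \<pi>" unfolding diagram_row_def by blast
      define S where "S = {j. (i,j) \<in> diagram n \<pi>}"
      have finS: "finite S" unfolding S_def by (rule finite_subset[of _ "{1..n}"]) (auto simp: Dm)
      have "j0 \<in> S" using j0 unfolding S_def by simp
      define jm where "jm = Max S"
      have "S \<noteq> {}" using \<open>j0 \<in> S\<close> by blast
      have jmS: "jm \<in> S" unfolding jm_def using finS \<open>S \<noteq> {}\<close> by (rule Lattices_Big.linorder_class.Max_in)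
      have jmax: "\<And>j. j \<in> S \<Longrightarrow> j \<le> jm" using finS unfolding jm_def by simp
      have jmD: "(i,jm) \<in> diagram n \<pi>" using jmS unfolding S_def by simp
      have "(i,jm) \<in> essential_set n \<pi>"
      proof -
        have "(i,jm+1) \<notin> diagram n \<pi>" using jmax[of "jm+1"] unfolding S_def by auto
        moreover have "(i+1,jm) \<notin> diagram n \<pi>"
        proof
          assume h: "(i+1,jm) \<in> diagram n \<pi>"
          show False
          proof (cases "\<pi> (i+1) < \<pi> i")
            case True
            have "\<pi> (i+1) \<in> {1..n}" using pin h Dm by auto
            then have "\<pi> (i+1) \<in> S" using True h jmD unfolding S_def by (auto simp: Dm inv_pi)
            then show False using jmax h Dm by fastforce
          next
            case False
            then have "\<pi> i < \<pi> (i+1)" using inj[of i "i+1"] by linarith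
            moreover have "inv \<pi> jm \<le> n" using ipin jmD Dm by auto
            ultimately show False using A[of i "i+1" "inv \<pi> jm"] h jmD by (auto simp: Dm pi_inv)
          qed
        qed
        ultimately show ?thesis using jmD Em by blast
      qed
      moreover have "\<And>j. (i,j) \<in> essential_set n \<pi> \<Longrightarrow> j = jm"
      proof (rule ccontr)
        fix j assume e: "(i,j) \<in> essential_set n \<pi>" and ne: "j \<noteq> jm"
        have jD: "(i,j) \<in> diagram n \<pi>" and e1: "(i+1,j) \<notin> diagram n \<pi>" and e2: "(i,j+1) \<notin> diagram n \<pi>"
          using e Em by auto
        have "j \<in> S" using jD unfolding S_def by simp
        then have "j < jm" using jmax ne by fastforce
        then have "j+1 < \<pi> i" using jmD Dm by auto
        have "j + 1 \<le> n" using \<open>j+1 < \<pi> i\<close> pin jD Dm by fastforce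
        then have "inv \<pi> (j+1) \<le> i" using e2 jD \<open>j+1 < \<pi> i\<close> by (auto simp: Dm)
        moreover have "inv \<pi> (j+1) \<noteq> i" using \<open>j+1 < \<pi> i\<close> pi_inv by (metis less_irrefl)
        moreover have "inv \<pi> (j+1) \<ge> 1" using ipin \<open>j+1 \<le> n\<close> by auto
        moreover have "i + 1 \<le> n" using jD ipin Dm by fastforce
        moreover have "\<pi> (i+1) \<le> j"
        proof (cases "inv \<pi> j = i+1")
          case True then show ?thesis using pi_inv by (metis order_refl)
        next
          case False then show ?thesis using e1 jD \<open>i+1 \<le> n\<close> by (auto simp: Dm)
        qed
        ultimately show False using A[of "inv \<pi> (j+1)" i "i+1"] \<open>j+1 < \<pi> i\<close> by (auto simp: pi_inv)
      qed
      ultimately have "{j. (i,j) \<in> essential_set n \<pi>} = {jm}" by blast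
      then show "card {j. (i,j) \<in> essential_set n \<pi>} = 1" by simp
    next
      fix j assume "diagram_col n \<pi> j"
      have fin: "finite {i. (i,j) \<in> essential_set n \<pi>}"
        by (rule finite_subset[of _ "{1..n}"]) (auto simp: Em Dm)
      have key: "\<And>i1 i2. (i1,j) \<in> essential_set n \<pi> \<Longrightarrow> (i2,j) \<in> essential_set n \<pi> \<Longrightarrow> i1 < i2 \<Longrightarrow> False"
      proof -
        fix i1 i2 assume e1: "(i1,j) \<in> essential_set n \<pi>" and e2: "(i2,j) \<in> essential_set n \<pi>" and lt: "i1 < i2"
        have d1: "(i1,j) \<in> diagram n \<pi>" and n1: "(i1,j+1) \<notin> diagram n \<pi>" and d2: "(i2,j) \<in> diagram n \<pi>"
          using e1 e2 Em by auto
        have "\<not> \<pi> i1 < \<pi> i2" using A[of i1 i2 "inv \<pi> j"] d1 d2 lt ipin by (auto simp: Dm pi_inv)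
        moreover have "\<pi> i1 \<noteq> \<pi> i2" using inj lt by simp
        ultimately have "j + 1 < \<pi> i1" using d2 Dm by auto
        have "j + 1 \<le> n" using \<open>j+1 < \<pi> i1\<close> pin d1 Dm by fastforce
        then have "inv \<pi> (j+1) \<le> i1" using n1 d1 \<open>j+1 < \<pi> i1\<close> by (auto simp: Dm)
        moreover have "inv \<pi> (j+1) \<noteq> i1" using \<open>j+1 < \<pi> i1\<close> pi_inv by (metis less_irrefl)
        moreover have "inv \<pi> (j+1) \<ge> 1" using ipin \<open>j+1 \<le> n\<close> by auto
        moreover have "inv \<pi> j \<le> n" using ipin d1 Dm by auto
        ultimately show False using A[of "inv \<pi> (j+1)" i1 "inv \<pi> j"] \<open>j+1 < \<pi> i1\<close> d1 by (auto simp: pi_inv Dm)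
      qed
      show "card {i. (i,j) \<in> essential_set n \<pi>} \<le> 1"
        using fin key by (auto simp: card_le_Suc0_iff_eq) (metis linorder_neqE_nat)
    qed
  next
    assume H: "(\<forall>i. diagram_row n \<pi> i \<longrightarrow> card {j. (i,j) \<in> essential_set n \<pi>} = 1) \<and>
     (\<forall>j. diagram_col n \<pi> j \<longrightarrow> card {i. (i,j) \<in> essential_set n \<pi>} \<le> 1)"
    show "avoids n \<pi> [2,3,1]"
    proof (rule ccontr)
      assume "\<not> avoids n \<pi> [2,3,1]"
      then obtain a0 b0 c0 where "1 \<le> a0" "a0 < b0" "b0 < c0" "c0 \<le> n" "\<pi> c0 < \<pi> a0" "\<pi> a0 < \<pi> b0"
        unfolding avoids_def c231_iff by blast
      from adjust231[OF perm this] obtain a b c where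
        h: "1 \<le> a" "a < b" "b < c" "c \<le> n" "\<pi> c < \<pi> a" "\<pi> a < \<pi> b" "\<pi> a = Suc (\<pi> c)" by blast
      define j where "j = \<pi> c"
      have jn: "j \<in> {1..n}" using pin h unfolding j_def by auto
      have ij: "inv \<pi> j = c" using inv_pi unfolding j_def by simp
      have ij1: "inv \<pi> (j+1) = a" using inv_pi h unfolding j_def by (metis Suc_eq_plus1)
      have neqj: "\<And>s. s < c \<Longrightarrow> \<pi> s \<noteq> j" using inj unfolding j_def by fastforce
      show False
      proof (cases "\<exists>d. a \<le> d \<and> d \<le> b \<and> \<pi> d < j")
        case False
        have "\<exists>i. a \<le> i \<and> i < b \<and> \<pi> i < \<pi> (Suc i)"
        proof (rule ccontr)
          assume "\<not> ?thesis"
          then have "\<forall>i. a \<le> i \<longrightarrow> i < b \<longrightarrow> \<pi> (Suc i) \<le> \<pi> i" by auto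
          from desc_chain[OF _ this] h show False by simp
        qed
        then obtain i where i: "a \<le> i" "i < b" "\<pi> i < \<pi> (Suc i)" by blast
        have "\<pi> i > j" using False i h neqj[of i] by fastforce
        then have "(i,j) \<in> diagram n \<pi>" using i h jn ij by (auto simp: Dm)
        then have "diagram_row n \<pi> i" unfolding diagram_row_def by blast
        then have "card {j. (i,j) \<in> essential_set n \<pi>} = 1" using H by blast
        then obtain j' where e: "(i,j') \<in> essential_set n \<pi>"
          by (metis (no_types, lifting) One_nat_def card_1_singletonE mem_Collect_eq singletonI)
        have d: "(i,j') \<in> diagram n \<pi>" and ne: "(i+1,j') \<notin> diagram n \<pi>" using e Em by auto
        have "inv \<pi> j' \<noteq> i+1" using d i pi_inv by (metis Dm Suc_eq_plus1 less_trans nat_less_le)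
        then have "(i+1,j') \<in> diagram n \<pi>" using d i h by (auto simp: Dm)
        then show False using ne by simp
      next
        case True
        then obtain d where d: "a \<le> d" "d \<le> b" "\<pi> d < j" by blast
        have "a < d" using d h unfolding j_def by (metis Suc_lessD leD nat_less_le)
        obtain t where t: "a \<le> t" "t < d" "\<pi> t > j" "\<not> \<pi> (Suc t) > j"
          using switch_point[of "\<lambda>s. \<pi> s > j" a d] \<open>a < d\<close> d h unfolding j_def by auto
        obtain u where u: "b \<le> u" "u < c" "\<pi> u > j" "\<not> \<pi> (Suc u) > j"
          using switch_point[of "\<lambda>s. \<pi> s > j" b c] h unfolding j_def by auto
        have et: "(t,j) \<in> essential_set n \<pi>"
          unfolding Em using t h jn ij ij1 d by (auto simp: Dm)
        have eu: "(u,j) \<in> essential_set n \<pi>"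
          unfolding Em using u h jn ij ij1 by (auto simp: Dm)
        have "diagram_col n \<pi> j" using et Em unfolding diagram_col_def by blast
        then have le: "card {i. (i,j) \<in> essential_set n \<pi>} \<le> 1" using H by blast
        have fin: "finite {i. (i,j) \<in> essential_set n \<pi>}"
          by (rule finite_subset[of _ "{1..n}"]) (auto simp: Em Dm)
        have "t \<noteq> u" using t u d by simp
        then show False using le fin et eu by (auto simp: card_le_Suc0_iff_eq)
      qed
    qed
  qed
qed

end
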